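(* Let $(X,T)$ be a weakly mixing topological dynamical system. Then either $BP(X,T)=X^2$ (and in this case $\operatorname{supp}(X,T)$ is a singleton), or $BP(X,T)$ is a first category subset of $X\times X$ disjoint from the set of transitive points of $(X^2,T\times T)$.
   Context: A topological dynamical system $(X,T)$ consists of a non-empty compact metric space $(X,d)$ and a continuous map $T:X\to X$. It is weakly mixing if $(X\times X,T\times T)$ is transitive (for all non-empty open $U,V$, $\{n\ge0:U\cap (T\times T)^{-n}V\ne\emptyset\}$ is infinite). A transitive point is a point with dense forward orbit. A set $F\subset\mathbb{Z}_+$ has Banach density one if for every $\lambda<1$ there is $N\ge1$ with $\#(F\cap I)\ge\lambda\,\#(I)$ for every interval of integers $I\subset\mathbb{Z}_+$ with $\#(I)\ge N$. A pair $(x,y)$ is Banach proximal if for every $\varepsilon>0$ the set $\{n\in\mathbb{Z}_+: d(T^nx,T^ny)<\varepsilon\}$ has Banach density one; $BP(X,T)$ is the set of Banach proximal pairs. $\operatorname{supp}(X,T)$ is the smallest closed set $C\subset X$ with $\mu(C)=1$ for all $T$-invariant Borel probability measures $\mu$. *)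

theory Defs
  imports "HOL-Probability.Probability"
begin

definition tds :: "'a::metric_space set \<Rightarrow> ('a \<Rightarrow> 'a) \<Rightarrow> bool" where
  "tds X T \<longleftrightarrow> X \<noteq> {} \<and> compact X \<and> continuous_on X T \<and> T ` X \<subseteq> X"

definition prod_map :: "('a \<Rightarrow> 'a) \<Rightarrow> ('a \<times> 'a \<Rightarrow> 'a \<times> 'a)" where
  "prod_map T = (\<lambda>(x, y). (T x, T y))"

definition top_transitive :: "'b::metric_space set \<Rightarrow> ('b \<Rightarrow> 'b) \<Rightarrow> bool" where
  "top_transitive Y S \<longleftrightarrow>
     (\<forall>U V. openin (top_of_set Y) U \<and> U \<noteq> {} \<and> openin (top_of_set Y) V \<and> V \<noteq> {} \<longrightarrow>
        infinite {n::nat. U \<inter> ((S ^^ n) -` V) \<noteq> {}})"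

definition weakly_mixing :: "'a::metric_space set \<Rightarrow> ('a \<Rightarrow> 'a) \<Rightarrow> bool" where
  "weakly_mixing X T \<longleftrightarrow> top_transitive (X \<times> X) (prod_map T)"

definition transitive_points :: "'b::metric_space set \<Rightarrow> ('b \<Rightarrow> 'b) \<Rightarrow> 'b set" where
  "transitive_points Y S = {z \<in> Y. Y \<subseteq> closure {(S ^^ n) z | n. True}}"

definition banach_density_one :: "nat set \<Rightarrow> bool" where
  "banach_density_one F \<longleftrightarrow>
     (\<forall>c::real. c < 1 \<longrightarrow> (\<exists>N\<ge>1. \<forall>a L. L \<ge> N \<longrightarrow>
        real (card (F \<inter> {a..<a + L})) \<ge> c * real L))"

definition banach_proximal_pairs :: "'a::metric_space set \<Rightarrow> ('a \<Rightarrow> 'a) \<Rightarrow> ('a \<times> 'a) set" where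
  "banach_proximal_pairs X T =
     {(x, y) \<in> X \<times> X. \<forall>\<epsilon>>0. banach_density_one {n. dist ((T ^^ n) x) ((T ^^ n) y) < \<epsilon>}}"

definition invariant_measures :: "'a::metric_space set \<Rightarrow> ('a \<Rightarrow> 'a) \<Rightarrow> 'a measure set" where
  "invariant_measures X T =
     {M. sets M = sets (restrict_space borel X) \<and> prob_space M \<and>
         T \<in> measurable M M \<and> distr M M T = M}"

definition is_support :: "'a::metric_space set \<Rightarrow> ('a \<Rightarrow> 'a) \<Rightarrow> 'a set \<Rightarrow> bool" where
  "is_support X T C \<longleftrightarrow>
     closed C \<and> C \<subseteq> X \<and> (\<forall>M\<in>invariant_measures X T. emeasure M C = 1) \<and>
     (\<forall>C'. closed C' \<and> C' \<subseteq> X \<and> (\<forall>M\<in>invariant_measures X T. emeasure M C' = 1) \<longrightarrow> C \<subseteq> C')"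

definition nowhere_dense_in :: "'b topology \<Rightarrow> 'b set \<Rightarrow> bool" where
  "nowhere_dense_in Y A \<longleftrightarrow> A \<subseteq> topspace Y \<and> Y interior_of (Y closure_of A) = {}"

definition first_category_in :: "'b topology \<Rightarrow> 'b set \<Rightarrow> bool" where
  "first_category_in Y S \<longleftrightarrow>
     (\<exists>\<F>. countable \<F> \<and> (\<forall>A\<in>\<F>. nowhere_dense_in Y A) \<and> S \<subseteq> \<Union>\<F>)"

end

theory Submission
  imports Defs
begin

lemma pm_pow: "(prod_map T ^^ n) (x, y) = ((T ^^ n) x, (T ^^ n) y)"
  by (induction n) (auto simp: prod_map_def)

lemma cont_pow:
  assumes "continuous_on Y S" "S ` Y \<subseteq> Y"
  shows "continuous_on Y (S ^^ n) \<and> (S ^^ n) ` Y \<subseteq> Y"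
proof (induction n)
  case 0 then show ?case by (auto intro: continuous_on_id)
next
  case (Suc n)
  have e: "S ^^ Suc n = (S ^^ n) \<circ> S" by (rule funpow_Suc_right)
  have "continuous_on Y ((S ^^ n) \<circ> S)"
    by (rule continuous_on_compose) (use assms Suc in \<open>auto intro: continuous_on_subset\<close>)
  moreover have "((S ^^ n) \<circ> S) ` Y \<subseteq> Y" using assms Suc by auto
  ultimately show ?case by (simp only: e)
qed

lemma bd1_nonempty:
  assumes "banach_density_one F"
  shows "\<exists>n. n \<in> F"
proof -
  obtain N where N: "N \<ge> 1" "\<forall>a L. L \<ge> N \<longrightarrow> real (card (F \<inter> {a..<a + L})) \<ge> (1/2) * real L"
  proof -
    have "(1/2::real) < 1" by simp
    then show ?thesis using assms that unfolding banach_density_one_def by blast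
  qed
  have "real (card (F \<inter> {0..<0 + N})) \<ge> (1/2) * real N" using N by blast
  moreover have "(1/2) * real N > 0" using N by simp
  ultimately have "F \<inter> {0..<N} \<noteq> {}" by auto
  then show ?thesis by blast
qed

lemma bd1_avg:
  assumes "banach_density_one F"
  shows "(\<lambda>N. real (card ({..<Suc N} - F)) / real (Suc N)) \<longlonglongrightarrow> 0"
proof (rule LIMSEQ_I)
  fix r :: real assume r: "r > 0"
  obtain N where N: "N \<ge> 1" "\<forall>a L. L \<ge> N \<longrightarrow> real (card (F \<inter> {a..<a + L})) \<ge> (1 - r/2) * real L"
  proof -
    have "1 - r/2 < 1" using r by simp
    then show ?thesis using assms that unfolding banach_density_one_def by blast
  qed
  show "\<exists>no. \<forall>n\<ge>no. norm (real (card ({..<Suc n} - F)) / real (Suc n) - 0) < r"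
  proof (intro exI allI impI)
    fix n assume "n \<ge> N"
    then have "real (card (F \<inter> {0..<0 + Suc n})) \<ge> (1 - r/2) * real (Suc n)" using N(2) le_Suc_eq by blast
    then have c1: "real (card ({..<Suc n} \<inter> F)) \<ge> (1 - r/2) * real (Suc n)"
      by (simp add: atLeast0LessThan Int_commute)
    have "card ({..<Suc n} - F) = card {..<Suc n} - card ({..<Suc n} \<inter> F)"
      by (rule card_Diff_subset_Int) simp
    moreover have "card ({..<Suc n} \<inter> F) \<le> card {..<Suc n}" by (rule card_mono) auto
    ultimately have "real (card ({..<Suc n} - F)) = real (Suc n) - real (card ({..<Suc n} \<inter> F))"
      by (simp add: of_nat_diff)
    also have "\<dots> \<le> (r/2) * real (Suc n)"
    proof -
      have "(1 - r/2) * real (Suc n) = real (Suc n) - (r/2) * real (Suc n)" by (simp add: algebra_simps)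
      then show ?thesis using c1 by linarith
    qed
    finally have "real (card ({..<Suc n} - F)) / real (Suc n) \<le> r/2"
      by (simp add: divide_le_eq)
    moreover have "0 \<le> real (card ({..<Suc n} - F)) / real (Suc n)" by simp
    ultimately show "norm (real (card ({..<Suc n} - F)) / real (Suc n) - 0) < r" using r
      by (simp only: diff_zero real_norm_def)
  qed
qed

lemma nontrans_meagre:
  fixes Y :: "'b::metric_space set" and S :: "'b \<Rightarrow> 'b"
  assumes cY: "compact Y" and cS: "continuous_on Y S" and SY: "S ` Y \<subseteq> Y"
    and tt: "top_transitive Y S"
  shows "first_category_in (top_of_set Y) (Y - transitive_points Y S)"
proof -
  have "\<forall>k::nat. \<exists>K. finite K \<and> K \<subseteq> Y \<and> Y \<subseteq> (\<Union>x\<in>K. ball x (1 / real (Suc k)))"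
    using seq_compact_imp_totally_bounded[OF compact_imp_seq_compact[OF cY]] by simp
  then obtain K where K: "\<And>k. finite (K k)" "\<And>k. K k \<subseteq> Y"
      "\<And>k. Y \<subseteq> (\<Union>x\<in>K k. ball x (1 / real (Suc k)))"
    by metis
  define UU where "UU = (\<Union>k. (\<lambda>c. Y \<inter> ball c (1 / real (Suc k))) ` K k)"
  define AU where "AU U = {z\<in>Y. \<forall>n. (S ^^ n) z \<notin> U}" for U
  have cntU: "countable UU" unfolding UU_def
    using K(1) by (intro countable_UN) (auto intro: countable_finite)
  have nd: "nowhere_dense_in (top_of_set Y) (AU U)" if "U \<in> UU" for U
  proof -
    obtain k c where c: "c \<in> Y" and Ueq: "U = Y \<inter> ball c (1 / real (Suc k))"
      using \<open>U \<in> UU\<close> K(2) unfolding UU_def by blast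
    define r where "r = 1 / real (Suc k)"
    have r: "r > 0" unfolding r_def by simp
    have Uo: "openin (top_of_set Y) U" unfolding Ueq by (simp add: openin_open_Int)
    have Une: "U \<noteq> {}" using c r unfolding Ueq r_def by auto
    have "(top_of_set Y) interior_of ((top_of_set Y) closure_of (AU U)) = {}"
    proof (rule ccontr)
      assume "(top_of_set Y) interior_of ((top_of_set Y) closure_of (AU U)) \<noteq> {}"
      then obtain W where Wo: "openin (top_of_set Y) W" and Wne: "W \<noteq> {}"
        and Wsub: "W \<subseteq> (top_of_set Y) closure_of (AU U)"
        unfolding interior_of_def by blast
      have "infinite {n::nat. W \<inter> ((S ^^ n) -` U) \<noteq> {}}"
        using tt Wo Wne Uo Une unfolding top_transitive_def by blast
      then obtain n where "W \<inter> ((S ^^ n) -` U) \<noteq> {}"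
        using infinite_imp_nonempty by fastforce
      then obtain w where w: "w \<in> W" "(S ^^ n) w \<in> U" by blast
      have WY: "W \<subseteq> Y" using openin_imp_subset[OF Wo] by simp
      have cn: "continuous_on Y (S ^^ n)" and snY: "(S ^^ n) ` Y \<subseteq> Y"
        using cont_pow[OF cS SY] by auto
      define W2 where "W2 = W \<inter> (Y \<inter> (S ^^ n) -` ball c r)"
      have W2o: "openin (top_of_set Y) W2" unfolding W2_def
        by (intro openin_Int Wo continuous_openin_preimage_gen[OF cn]) simp
      have "w \<in> W2" using w WY unfolding W2_def Ueq r_def by auto
      then have "w \<in> (top_of_set Y) closure_of (AU U)" using Wsub unfolding W2_def by auto
      then obtain y where y: "y \<in> AU U" "y \<in> W2"
        using W2o \<open>w \<in> W2\<close> unfolding in_closure_of by blast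
      then have "y \<in> Y" "(S ^^ n) y \<in> ball c r" unfolding W2_def by auto
      then have "(S ^^ n) y \<in> U" using snY unfolding Ueq r_def by auto
      then show False using y(1) unfolding AU_def by blast
    qed
    moreover have "AU U \<subseteq> topspace (top_of_set Y)" unfolding AU_def by auto
    ultimately show ?thesis unfolding nowhere_dense_in_def by blast
  qed
  have cov: "Y - transitive_points Y S \<subseteq> \<Union>(AU ` UU)"
  proof
    fix z assume z: "z \<in> Y - transitive_points Y S"
    then have zY: "z \<in> Y" and "\<not> Y \<subseteq> closure {(S ^^ n) z | n. True}"
      unfolding transitive_points_def by auto
    then obtain q where q: "q \<in> Y" "q \<notin> closure {(S ^^ n) z | n. True}" by blast
    then obtain e where e: "e > 0" "\<forall>y\<in>{(S ^^ n) z | n. True}. \<not> dist y q < e"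
      unfolding closure_approachable by blast
    obtain k where k: "1 / real (Suc k) < e / 2"
      using e(1) by (metis half_gt_zero nat_approx_posE)
    obtain c where c: "c \<in> K k" "q \<in> ball c (1 / real (Suc k))" using K(3) q(1) by blast
    define U where "U = Y \<inter> ball c (1 / real (Suc k))"
    have "U \<in> UU" unfolding UU_def U_def using c by blast
    moreover have "z \<in> AU U"
      unfolding AU_def
    proof (intro CollectI conjI allI zY notI)
      fix n assume "(S ^^ n) z \<in> U"
      then have "dist c ((S ^^ n) z) < 1 / real (Suc k)" unfolding U_def by auto
      moreover have "dist c q < 1 / real (Suc k)" using c by auto
      ultimately have "dist ((S ^^ n) z) q < e" using k dist_triangle3[of "(S ^^ n) z" q c] by linarith
      then show False using e(2) by blast
    qed
    ultimately show "z \<in> \<Union>(AU ` UU)" by blast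
  qed
  show ?thesis unfolding first_category_in_def
    using cntU nd cov by (intro exI[of _ "AU ` UU"]) auto
qed

lemma tds_pow:
  assumes "tds X T"
  shows "continuous_on X (T ^^ n) \<and> (T ^^ n) ` X \<subseteq> X"
  using assms cont_pow unfolding tds_def by blast

lemma bp_trans:
  fixes X :: "'a::metric_space set" and T :: "'a \<Rightarrow> 'a"
  assumes tds: "tds X T" and zB: "z \<in> banach_proximal_pairs X T"
    and zT: "z \<in> transitive_points (X \<times> X) (prod_map T)"
  shows "banach_proximal_pairs X T = X \<times> X"
proof
  show "banach_proximal_pairs X T \<subseteq> X \<times> X" unfolding banach_proximal_pairs_def by auto
  show "X \<times> X \<subseteq> banach_proximal_pairs X T"
  proof (clarify)
    fix a b assume ab: "a \<in> X" "b \<in> X"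
    obtain x y where zxy: "z = (x, y)" by fastforce
    have Fz: "\<forall>\<epsilon>>0. banach_density_one {n. dist ((T ^^ n) x) ((T ^^ n) y) < \<epsilon>}"
      using zB zxy unfolding banach_proximal_pairs_def by auto
    have abcl: "(a, b) \<in> closure {(prod_map T ^^ n) z | n. True}"
      using zT ab unfolding transitive_points_def by auto
    have "banach_density_one {n. dist ((T ^^ n) a) ((T ^^ n) b) < \<epsilon>}" if ep: "\<epsilon> > 0" for \<epsilon>
      unfolding banach_density_one_def
    proof (intro allI impI)
      fix c :: real assume c: "c < 1"
      define G where "G = {n. dist ((T ^^ n) a) ((T ^^ n) b) < \<epsilon>}"
      define F where "F = {n. dist ((T ^^ n) x) ((T ^^ n) y) < \<epsilon>/2}"
      have "banach_density_one F" unfolding F_def using Fz ep half_gt_zero by blast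
      then obtain N where N: "N \<ge> 1" "\<forall>a L. L \<ge> N \<longrightarrow> real (card (F \<inter> {a..<a + L})) \<ge> c * real L"
        using c unfolding banach_density_one_def by blast
      show "\<exists>N\<ge>1. \<forall>a0 L. N \<le> L \<longrightarrow> c * real L \<le> real (card (G \<inter> {a0..<a0 + L}))"
      proof (rule ccontr)
        assume "\<not> ?thesis"
        then obtain a0 L where L: "L \<ge> N" and small: "real (card (G \<inter> {a0..<a0 + L})) < c * real L"
          using N(1) by (meson not_le)
        define I where "I = {a0..<a0 + L}"
        have Ine: "I \<noteq> {}" "finite I" unfolding I_def using L N(1) by auto
        have "\<forall>n. \<exists>d>0. (\<forall>u\<in>X. dist u a < d \<longrightarrow> dist ((T ^^ n) u) ((T ^^ n) a) < \<epsilon>/4)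
                 \<and> (\<forall>u\<in>X. dist u b < d \<longrightarrow> dist ((T ^^ n) u) ((T ^^ n) b) < \<epsilon>/4)"
        proof
          fix n
          have cn: "continuous_on X (T ^^ n)" using tds_pow[OF tds] by blast
          obtain d1 where d1: "d1 > 0" "\<forall>u\<in>X. dist u a < d1 \<longrightarrow> dist ((T ^^ n) u) ((T ^^ n) a) < \<epsilon>/4"
            using cn ab(1) ep unfolding continuous_on_iff by (metis divide_pos_pos zero_less_numeral)
          obtain d2 where d2: "d2 > 0" "\<forall>u\<in>X. dist u b < d2 \<longrightarrow> dist ((T ^^ n) u) ((T ^^ n) b) < \<epsilon>/4"
            using cn ab(2) ep unfolding continuous_on_iff by (metis divide_pos_pos zero_less_numeral)
          show "\<exists>d>0. (\<forall>u\<in>X. dist u a < d \<longrightarrow> dist ((T ^^ n) u) ((T ^^ n) a) < \<epsilon>/4)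
                 \<and> (\<forall>u\<in>X. dist u b < d \<longrightarrow> dist ((T ^^ n) u) ((T ^^ n) b) < \<epsilon>/4)"
            using d1 d2 by (intro exI[of _ "min d1 d2"]) auto
        qed
        then obtain d where d: "\<And>n. d n > 0"
          "\<And>n u. u \<in> X \<Longrightarrow> dist u a < d n \<Longrightarrow> dist ((T ^^ n) u) ((T ^^ n) a) < \<epsilon>/4"
          "\<And>n u. u \<in> X \<Longrightarrow> dist u b < d n \<Longrightarrow> dist ((T ^^ n) u) ((T ^^ n) b) < \<epsilon>/4"
          by metis
        define d0 where "d0 = Min (d ` I)"
        have d0: "d0 > 0" unfolding d0_def using Ine d by auto
        have d0le: "d0 \<le> d n" if "n \<in> I" for n unfolding d0_def using Ine that by auto
        obtain w where w: "w \<in> {(prod_map T ^^ n) z | n. True}" "dist w (a, b) < d0"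
          using abcl d0 unfolding closure_approachable by blast
        then obtain k where wk: "w = ((T ^^ k) x, (T ^^ k) y)" using zxy by (auto simp: pm_pow)
        have xX: "x \<in> X" "y \<in> X" using zB zxy unfolding banach_proximal_pairs_def by auto
        have kX: "(T ^^ k) x \<in> X" "(T ^^ k) y \<in> X" using tds_pow[OF tds] xX by blast+
        have dk: "dist ((T ^^ k) x) a < d0" "dist ((T ^^ k) y) b < d0"
          using w(2) dist_fst_le[of w "(a,b)"] dist_snd_le[of w "(a,b)"] wk by auto
        have sub: "F \<inter> {a0 + k..<a0 + k + L} \<subseteq> (\<lambda>n. n + k) ` (G \<inter> I)"
        proof
          fix m assume m: "m \<in> F \<inter> {a0 + k..<a0 + k + L}"
          define n where "n = m - k"
          have mn: "m = n + k" and nI: "n \<in> I" using m unfolding n_def I_def by auto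
          have e1: "dist ((T ^^ n) ((T ^^ k) x)) ((T ^^ n) a) < \<epsilon>/4"
            using d(2)[OF kX(1)] dk(1) d0le[OF nI] by force
          have e2: "dist ((T ^^ n) ((T ^^ k) y)) ((T ^^ n) b) < \<epsilon>/4"
            using d(3)[OF kX(2)] dk(2) d0le[OF nI] by force
          have e3: "dist ((T ^^ n) ((T ^^ k) x)) ((T ^^ n) ((T ^^ k) y)) < \<epsilon>/2"
            using m unfolding F_def mn by (simp add: funpow_add)
          have "dist ((T ^^ n) a) ((T ^^ n) b) \<le>
              dist ((T ^^ n) a) ((T ^^ n) ((T ^^ k) x)) + dist ((T ^^ n) ((T ^^ k) x)) ((T ^^ n) ((T ^^ k) y))
              + dist ((T ^^ n) ((T ^^ k) y)) ((T ^^ n) b)"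
            using dist_triangle[of "(T ^^ n) a" "(T ^^ n) ((T ^^ k) y)" "(T ^^ n) ((T ^^ k) x)"]
              dist_triangle[of "(T ^^ n) a" "(T ^^ n) b" "(T ^^ n) ((T ^^ k) y)"]
            by linarith
          then have "n \<in> G" unfolding G_def using e1 e2 e3 by (simp add: dist_commute)
          then show "m \<in> (\<lambda>n. n + k) ` (G \<inter> I)" using mn nI by blast
        qed
        have "c * real L \<le> real (card (F \<inter> {a0 + k..<a0 + k + L}))" using N(2) L by blast
        also have "\<dots> \<le> real (card ((\<lambda>n. n + k) ` (G \<inter> I)))"
          using sub Ine by (intro of_nat_mono card_mono) auto
        also have "\<dots> \<le> real (card (G \<inter> I))" by (intro of_nat_mono card_image_le) (use Ine in auto)
        finally show False using small unfolding I_def by linarith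
      qed
    qed
    then show "(a, b) \<in> banach_proximal_pairs X T"
      unfolding banach_proximal_pairs_def using ab by auto
  qed
qed

lemma fix_pow: "T p = p \<Longrightarrow> (T ^^ n) p = p"
  by (induction n) auto

lemma meas_point:
  fixes X :: "'a::metric_space set" and T :: "'a \<Rightarrow> 'a"
  assumes tds: "tds X T" and Tp: "T p = p" and pX: "p \<in> X"
    and bp: "\<And>x. x \<in> X \<Longrightarrow> (x, p) \<in> banach_proximal_pairs X T"
    and M: "M \<in> invariant_measures X T"
  shows "emeasure M {p} = 1"
proof -
  have sM: "sets M = sets (restrict_space borel X)" and ps: "prob_space M"
    and Tm: "T \<in> measurable M M" and inv: "distr M M T = M"
    using M unfolding invariant_measures_def by auto
  interpret prob_space M by (rule ps)
  have spM: "space M = X" using sets_eq_imp_space_eq[OF sM] by (simp add: space_restrict_space)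
  have Xc: "closed X" using tds unfolding tds_def by (simp add: compact_imp_closed)
  have setsI: "A \<in> sets M" if "A \<subseteq> X" "A \<in> sets borel" for A
    unfolding sM using that Xc by (subst sets_restrict_space_iff) auto
  have Tnm: "(T ^^ n) \<in> measurable M M" for n
  proof (induction n)
    case 0 then show ?case by simp
  next
    case (Suc n) then show ?case using Tm by (simp add: funpow_Suc_right)
  qed
  have invn: "distr M M (T ^^ n) = M" for n
  proof (induction n)
    case 0 then show ?case by (simp add: distr_id2 sets_eq_imp_space_eq)
  next
    case (Suc n)
    have "distr M M (T ^^ Suc n) = distr M M ((T ^^ n) \<circ> T)" by (simp only: funpow_Suc_right)
    also have "\<dots> = distr (distr M M T) M (T ^^ n)" using Tnm Tm by (simp add: distr_distr)
    also have "\<dots> = M" using inv Suc by simp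
    finally show ?case .
  qed
  have Azero: "measure M {y\<in>X. e \<le> dist y p} = 0" if e: "e > 0" for e
  proof -
    define A where "A = {y\<in>X. e \<le> dist y p}"
    have "closed {y. e \<le> dist y p}" by (intro closed_Collect_le continuous_intros)
    moreover have "A = X \<inter> {y. e \<le> dist y p}" unfolding A_def by auto
    ultimately have AM: "A \<in> sets M" using Xc by (intro setsI) auto
    have im: "(\<lambda>x. indicator A ((T ^^ n) x) :: real) \<in> borel_measurable M" for n
      using AM Tnm by measurable
    have intn: "integral\<^sup>L M (\<lambda>x. indicator A ((T ^^ n) x) :: real) = measure M A" for n
    proof -
      have "integral\<^sup>L M (\<lambda>x. indicator A ((T ^^ n) x) :: real)
          = integral\<^sup>L (distr M M (T ^^ n)) (indicator A)"
        using Tnm AM by (subst integral_distr) auto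
      also have "\<dots> = measure M A" using invn AM by (simp add: integral_indicator)
      finally show ?thesis .
    qed
    define s where "s N x = (\<Sum>n<Suc N. indicator A ((T ^^ n) x)) / real (Suc N)" for N x
    have sm: "s N \<in> borel_measurable M" for N unfolding s_def using im by measurable
    have sint: "integral\<^sup>L M (s N) = measure M A" for N
    proof -
      have "integral\<^sup>L M (s N) = (\<Sum>n<Suc N. integral\<^sup>L M (\<lambda>x. indicator A ((T ^^ n) x) :: real)) / real (Suc N)"
      proof -
        have ii: "integrable M (\<lambda>x. indicator A ((T ^^ n) x) :: real)" for n
        proof (rule integrable_const_bound[where B=1])
          show "AE x in M. norm (indicator A ((T ^^ n) x) :: real) \<le> 1"
            by (rule AE_I2) (simp add: indicator_def)
        qed (rule im)
        have "integral\<^sup>L M (s N) = integral\<^sup>L M (\<lambda>x. \<Sum>n<Suc N. indicator A ((T ^^ n) x) :: real) / real (Suc N)"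
          unfolding s_def by simp
        also have "\<dots> = (\<Sum>n<Suc N. integral\<^sup>L M (\<lambda>x. indicator A ((T ^^ n) x) :: real)) / real (Suc N)"
          using Bochner_Integration.integral_sum[where I="{..<Suc N}" and M=M and f="\<lambda>n x. indicator A ((T ^^ n) x) :: real"] ii by simp
        finally show ?thesis .
      qed
      also have "\<dots> = measure M A" using intn by simp
      finally show ?thesis .
    qed
    have slim: "(\<lambda>N. s N x) \<longlonglongrightarrow> 0" if x: "x \<in> X" for x
    proof -
      define F where "F = {n. dist ((T ^^ n) x) ((T ^^ n) p) < e}"
      have "banach_density_one F" unfolding F_def using bp[OF x] e
        unfolding banach_proximal_pairs_def by auto
      note lim = bd1_avg[OF this]
      have "s N x \<le> real (card ({..<Suc N} - F)) / real (Suc N)" for N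
      proof -
        have "(\<Sum>n<Suc N. indicator A ((T ^^ n) x) :: real) \<le> (\<Sum>n<Suc N. indicator (UNIV - F) n)"
        proof (rule sum_mono)
          fix n assume "n \<in> {..<Suc N}"
          show "indicator A ((T ^^ n) x) \<le> (indicator (UNIV - F) n :: real)"
            using fix_pow[of T p n, OF Tp] unfolding A_def F_def indicator_def by auto
        qed
        also have "\<dots> = real (card ({..<Suc N} - F))"
        proof -
          have "(\<Sum>n<Suc N. indicator (UNIV - F) n :: nat) = card ({..<Suc N} \<inter> (UNIV - F))"
            by (rule sum_indicator_eq_card) simp
          moreover have "real (\<Sum>n<Suc N. indicator (UNIV - F) n :: nat) = (\<Sum>n<Suc N. indicator (UNIV - F) n :: real)"
            unfolding of_nat_sum by (intro sum.cong) (auto simp: indicator_def)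
          ultimately have "(\<Sum>n<Suc N. indicator (UNIV - F) n :: real) = real (card ({..<Suc N} \<inter> (UNIV - F)))"
            by simp
          then show ?thesis by (simp add: Diff_eq del: sum.lessThan_Suc)
        qed
        finally show ?thesis unfolding s_def by (simp add: divide_right_mono)
      qed
      moreover have "0 \<le> s N x" for N unfolding s_def by (simp add: sum_nonneg)
      ultimately show ?thesis using lim by (intro tendsto_sandwich[OF _ _ tendsto_const lim]) auto
    qed
    have "(\<lambda>N. integral\<^sup>L M (s N)) \<longlonglongrightarrow> integral\<^sup>L M (\<lambda>x. 0 :: real)"
    proof (rule integral_dominated_convergence[where w="\<lambda>_. 1"])
      show "AE x in M. (\<lambda>N. s N x) \<longlonglongrightarrow> 0" using slim spM by (intro AE_I2) auto
      show "AE x in M. norm (s N x) \<le> 1" for N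
      proof (intro AE_I2)
        fix x
        have "(\<Sum>n<Suc N. indicator A ((T ^^ n) x) :: real) \<le> (\<Sum>n<Suc N. 1)"
          by (intro sum_mono) (simp add: indicator_def)
        then show "norm (s N x) \<le> 1" unfolding s_def by (simp add: sum_nonneg)
      qed
    qed (use sm in auto)
    then have "(\<lambda>N. measure M A) \<longlonglongrightarrow> 0" using sint by simp
    then show ?thesis unfolding A_def using LIMSEQ_const_iff by blast
  qed
  define N where "N k = {y\<in>X. 1 / real (Suc k) \<le> dist y p}" for k
  have NM: "N k \<in> sets M" for k
  proof -
    have "closed {y. 1 / real (Suc k) \<le> dist y p}" by (intro closed_Collect_le continuous_intros)
    moreover have "N k = X \<inter> {y. 1 / real (Suc k) \<le> dist y p}" unfolding N_def by auto
    ultimately show ?thesis using Xc by (intro setsI) auto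
  qed
  have "emeasure M (\<Union>k. N k) = 0"
  proof (rule emeasure_UN_eq_0)
    show "emeasure M (N k) = 0" for k using Azero[of "1 / real (Suc k)"] NM
      unfolding N_def by (simp add: emeasure_eq_measure)
  qed (use NM in auto)
  moreover have "(\<Union>k. N k) = X - {p}"
  proof
    show "(\<Union>k. N k) \<subseteq> X - {p}" unfolding N_def by auto
    show "X - {p} \<subseteq> (\<Union>k. N k)"
    proof
      fix y assume y: "y \<in> X - {p}"
      then have "dist y p > 0" by simp
      then obtain k where "1 / real (Suc k) < dist y p" using nat_approx_posE by blast
      then have "y \<in> N k" unfolding N_def using y by auto
      then show "y \<in> (\<Union>k. N k)" by blast
    qed
  qed
  ultimately have z: "measure M (X - {p}) = 0" by (simp add: measure_def)
  have pM: "{p} \<in> sets M" using pX by (intro setsI) auto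
  have "prob (space M - {p}) = 1 - prob {p}" using pM by (rule prob_compl)
  then have "measure M {p} = 1" using z spM by simp
  then show ?thesis by (simp add: emeasure_eq_measure)
qed

lemma fixed_point:
  fixes X :: "'a::metric_space set" and T :: "'a \<Rightarrow> 'a"
  assumes tds: "tds X T" and all: "banach_proximal_pairs X T = X \<times> X"
  shows "\<exists>p\<in>X. T p = p"
proof -
  have Xne: "X \<noteq> {}" and cX: "compact X" and cT: "continuous_on X T" and TX: "T ` X \<subseteq> X"
    using tds unfolding tds_def by auto
  have "continuous_on X (\<lambda>x. dist x (T x))" using cT by (intro continuous_intros) auto
  then obtain p where pX: "p \<in> X" and pmin: "\<forall>y\<in>X. dist p (T p) \<le> dist y (T y)"
    using continuous_attains_inf[OF cX Xne] by blast
  have "T p = p"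
  proof (rule ccontr)
    assume "T p \<noteq> p"
    then have pos: "dist p (T p) > 0" by simp
    have "(p, T p) \<in> banach_proximal_pairs X T" using all pX TX by auto
    then have "banach_density_one {n. dist ((T ^^ n) p) ((T ^^ n) (T p)) < dist p (T p)}"
      using pos unfolding banach_proximal_pairs_def by auto
    then obtain n where n: "dist ((T ^^ n) p) ((T ^^ n) (T p)) < dist p (T p)"
      using bd1_nonempty by blast
    have "(T ^^ n) p \<in> X" using tds_pow[OF tds] pX by blast
    then have "dist p (T p) \<le> dist ((T ^^ n) p) (T ((T ^^ n) p))" using pmin by blast
    moreover have "(T ^^ n) (T p) = T ((T ^^ n) p)" by (simp add: funpow_swap1)
    ultimately show False using n by (simp only:)
  qed
  then show ?thesis using pX by blast
qed

lemma support_point: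
  fixes X :: "'a::metric_space set" and T :: "'a \<Rightarrow> 'a"
  assumes tds: "tds X T" and pX: "p \<in> X" and Tp: "T p = p"
    and allM: "\<And>M. M \<in> invariant_measures X T \<Longrightarrow> emeasure M {p} = 1"
  shows "is_support X T {p}"
  unfolding is_support_def
proof (intro conjI allI impI ballI)
  show "closed {p}" by simp
  show "{p} \<subseteq> X" using pX by simp
  show "emeasure M {p} = 1" if "M \<in> invariant_measures X T" for M using allM that .
  fix C' assume C': "closed C' \<and> C' \<subseteq> X \<and> (\<forall>M\<in>invariant_measures X T. emeasure M C' = 1)"
  define B where "B = restrict_space borel X"
  define D where "D = return B p"
  have cT: "continuous_on X T" and TX: "T ` X \<subseteq> X" and cX: "compact X"
    using tds unfolding tds_def by auto
  have spB: "space B = X" unfolding B_def by (simp add: space_restrict_space)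
  have TB: "T \<in> B \<rightarrow>\<^sub>M B" unfolding B_def
    by (rule measurable_restrict_space2) (use TX borel_measurable_continuous_on_restrict[OF cT] in \<open>auto simp: space_restrict_space\<close>)
  have sD: "sets D = sets B" unfolding D_def by simp
  have TD: "T \<in> D \<rightarrow>\<^sub>M D" using TB measurable_cong_sets[OF sD sD] by blast
  have TBD: "T \<in> B \<rightarrow>\<^sub>M D" using TB measurable_cong_sets[OF refl sD] by blast
  have "distr D D T = distr (return B p) D T" unfolding D_def ..
  also have "\<dots> = return D (T p)"
    by (rule distr_return[OF TBD]) (use pX spB in simp)
  also have "\<dots> = return D p" using Tp by simp
  also have "\<dots> = D" unfolding D_def by (rule return_cong) (rule sD[unfolded D_def])
  finally have dD: "distr D D T = D" .
  have pD: "prob_space D" unfolding D_def by (rule prob_space_return) (use pX spB in simp)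
  have "D \<in> invariant_measures X T" unfolding invariant_measures_def
    using sD dD TD pD unfolding B_def by blast
  then have "emeasure D C' = 1" using C' by blast
  moreover have "C' \<in> sets B" unfolding B_def using C' compact_imp_closed[OF cX]
    by (subst sets_restrict_space_iff) auto
  ultimately have "indicator C' p = (1::ennreal)" unfolding D_def by (simp add: emeasure_return)
  then have "p \<in> C'" by (cases "p \<in> C'") simp_all
  then show "{p} \<subseteq> C'" by simp
qed

theorem mainTheorem10:
  fixes X :: "'a::metric_space set" and T :: "'a \<Rightarrow> 'a"
  assumes "tds X T" and "weakly_mixing X T"
  shows "(banach_proximal_pairs X T = X \<times> X \<and> (\<exists>x. is_support X T {x}))
       \<or> (first_category_in (top_of_set (X \<times> X)) (banach_proximal_pairs X T) \<and>
          banach_proximal_pairs X T \<inter> transitive_points (X \<times> X) (prod_map T) = {})"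
proof (cases "banach_proximal_pairs X T = X \<times> X")
  case True
  obtain p where pX: "p \<in> X" and Tp: "T p = p" using fixed_point[OF assms(1) True] by blast
  have bpp: "(x, p) \<in> banach_proximal_pairs X T" if "x \<in> X" for x
    using True pX that by blast
  have "is_support X T {p}"
    using support_point[OF assms(1) pX Tp] meas_point[OF assms(1) Tp pX bpp] by blast
  then show ?thesis using True by blast
next
  case False
  have disj: "banach_proximal_pairs X T \<inter> transitive_points (X \<times> X) (prod_map T) = {}"
    using bp_trans[OF assms(1)] False by blast
  have cX: "compact X" and cT: "continuous_on X T" and TX: "T ` X \<subseteq> X"
    using assms(1) unfolding tds_def by auto
  have pm: "prod_map T = (\<lambda>z. (T (fst z), T (snd z)))" unfolding prod_map_def by auto
  have cP: "continuous_on (X \<times> X) (prod_map T)" unfolding pm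
    by (intro continuous_on_Pair continuous_on_compose2[OF cT continuous_on_fst]
        continuous_on_compose2[OF cT continuous_on_snd]) auto
  have PX: "prod_map T ` (X \<times> X) \<subseteq> X \<times> X" using TX unfolding pm by auto
  have fc: "first_category_in (top_of_set (X \<times> X)) (X \<times> X - transitive_points (X \<times> X) (prod_map T))"
    by (rule nontrans_meagre[OF compact_Times[OF cX cX] cP PX])
       (use assms(2) in \<open>simp add: weakly_mixing_def\<close>)
  have sub: "banach_proximal_pairs X T \<subseteq> X \<times> X - transitive_points (X \<times> X) (prod_map T)"
    using disj unfolding banach_proximal_pairs_def by auto
  have "first_category_in (top_of_set (X \<times> X)) (banach_proximal_pairs X T)"
  proof -
    obtain FF where FF: "countable FF" "\<forall>A\<in>FF. nowhere_dense_in (top_of_set (X \<times> X)) A"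
      "X \<times> X - transitive_points (X \<times> X) (prod_map T) \<subseteq> \<Union>FF"
      using fc unfolding first_category_in_def by blast
    have "banach_proximal_pairs X T \<subseteq> \<Union>FF" using sub FF(3) by (rule subset_trans)
    then show ?thesis unfolding first_category_in_def using FF(1,2) by blast
  qed
  then show ?thesis using disj by (intro disjI2 conjI)
qed

end
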